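(* Let $\mathcal{G}_n(\mathcal{X},\mathcal{Y},d,Q)$ be a position-optimization game (as defined in the context) and let $c>0$ satisfy $n\ge\frac1c>\frac{2}{p_0}$. Then in every pure Nash equilibrium $\bm{x}$, for every $x\in\mathcal{X}^*$, $k_{\bm{x}}(x)\ge\lfloor cn\rfloor$.
   Context: Position-optimization game: $\mathcal{X}$ is an arbitrary set of positions, $\mathcal{Y}$ an arbitrary set of targets, $d:\mathcal{X}\times\mathcal{Y}\to[0,\infty]$ a proximity function. For $y\in\mathcal{Y}$ let $x^*(y)=\arg\min_{x\in\mathcal{X}} d(x,y)$, and $\mathcal{X}^*=\bigcup_{y\in\mathcal{Y}}x^*(y)$ (pseudo-targets). $Q$ is a probability distribution on $\mathcal{Y}$ with $Q(\{y:|x^*(y)|>1\})=0$ and $|\mathcal{X}^*|<\infty$. For $x\in\mathcal{X}^*$ let $P(x)=Q(\{y: x^*(y)=\{x\}\})$ and $p_0=\min_{x\in\mathcal{X}^*}P(x)$. In the game $\mathcal{G}_n(\mathcal{X},\mathcal{Y},d,Q)$, players $i\in[n]$ choose positions $x_i\in\mathcal{X}$, $\bm{x}=(x_1,\dots,x_n)$; with $X_{\min}(\bm{x},y)=\arg\min_{x_i\in\bm{x}} d(x_i,y)$, player $i$'s utility is $u_i(x_i,\bm{x}_{-i})=\mathbb{E}_{y\sim Q}\big[\mathbb{1}[x_i\in X_{\min}(\bm{x},y)]/|X_{\min}(\bm{x},y)|\big]$. A pure Nash equilibrium is $\bm{x}$ with $u_i(x_i',\bm{x}_{-i})\le u_i(x_i,\bm{x}_{-i})$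 for all $i$, $x_i'\in\mathcal{X}$. $k_{\bm{x}}(x)$ is the number of players at position $x$. *)

theory Defs
  imports "HOL-Probability.Probability"
begin

text \<open>Positions: a set X of type 'x; targets: the space of the
  probability measure Q; proximity d with values in [0,\<infinity>] (ennreal).
  A profile of n players is a function xs :: nat \<Rightarrow> 'x, player i < n sits at xs i.\<close>

definition xstar :: "'x set \<Rightarrow> ('x \<Rightarrow> 'y \<Rightarrow> ennreal) \<Rightarrow> 'y \<Rightarrow> 'x set" where
  "xstar X d y = {x \<in> X. \<forall>x'\<in>X. d x y \<le> d x' y}"

definition Xstar :: "'x set \<Rightarrow> ('x \<Rightarrow> 'y \<Rightarrow> ennreal) \<Rightarrow> 'y measure \<Rightarrow> 'x set" where
  "Xstar X d Q = (\<Union>y\<in>space Q. xstar X d y)"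

definition Pmass :: "'x set \<Rightarrow> ('x \<Rightarrow> 'y \<Rightarrow> ennreal) \<Rightarrow> 'y measure \<Rightarrow> 'x \<Rightarrow> real" where
  "Pmass X d Q x = measure Q {y \<in> space Q. xstar X d y = {x}}"

definition p0 :: "'x set \<Rightarrow> ('x \<Rightarrow> 'y \<Rightarrow> ennreal) \<Rightarrow> 'y measure \<Rightarrow> real" where
  "p0 X d Q = Min (Pmass X d Q ` Xstar X d Q)"

definition winners :: "('x \<Rightarrow> 'y \<Rightarrow> ennreal) \<Rightarrow> nat \<Rightarrow> (nat \<Rightarrow> 'x) \<Rightarrow> 'y \<Rightarrow> nat set" where
  "winners d n xs y = {i. i < n \<and> (\<forall>j<n. d (xs i) y \<le> d (xs j) y)}"

definition utility :: "('x \<Rightarrow> 'y \<Rightarrow> ennreal) \<Rightarrow> 'y measure \<Rightarrow> nat \<Rightarrow> (nat \<Rightarrow> 'x) \<Rightarrow> nat \<Rightarrow> real" where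
  "utility d Q n xs i =
     (\<integral>y. (if i \<in> winners d n xs y then 1 / real (card (winners d n xs y)) else 0) \<partial>Q)"

definition is_profile :: "'x set \<Rightarrow> nat \<Rightarrow> (nat \<Rightarrow> 'x) \<Rightarrow> bool" where
  "is_profile X n xs \<longleftrightarrow> (\<forall>i<n. xs i \<in> X)"

definition pure_NE :: "'x set \<Rightarrow> ('x \<Rightarrow> 'y \<Rightarrow> ennreal) \<Rightarrow> 'y measure \<Rightarrow> nat \<Rightarrow> (nat \<Rightarrow> 'x) \<Rightarrow> bool" where
  "pure_NE X d Q n xs \<longleftrightarrow> is_profile X n xs \<and>
     (\<forall>i<n. \<forall>x'\<in>X. utility d Q n (xs(i := x')) i \<le> utility d Q n xs i)"

definition kcount :: "nat \<Rightarrow> (nat \<Rightarrow> 'x) \<Rightarrow> 'x \<Rightarrow> nat" where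
  "kcount n xs x = card {i. i < n \<and> xs i = x}"

end

theory Submission
  imports Defs
begin

lemma winners_meas:
  assumes dm: "\<forall>j<n. d (ys j) \<in> borel_measurable Q"
  shows "(\<lambda>y. winners d n ys y) \<in> measurable Q (count_space (Pow {..<n}))"
proof (subst measurable_count_space_eq2, simp, intro conjI ballI)
  show "(\<lambda>y. winners d n ys y) \<in> space Q \<rightarrow> Pow {..<n}"
    by (auto simp: winners_def)
next
  fix S assume S: "S \<in> Pow {..<n}"
  have le: "{y \<in> space Q. j < n \<longrightarrow> d (ys i) y \<le> d (ys j) y} \<in> sets Q" if i: "i < n" for i j
  proof (cases "j < n")
    case True
    thus ?thesis using borel_measurable_le[OF dm[rule_format, OF i] dm[rule_format, OF True]] by simp
  next
    case False
    thus ?thesis by simp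
  qed
  have all: "{y \<in> space Q. \<forall>j. j < n \<longrightarrow> d (ys i) y \<le> d (ys j) y} \<in> sets Q" if "i < n" for i
    by (rule sets.sets_Collect_countable_All[of Q "\<lambda>j y. j < n \<longrightarrow> d (ys i) y \<le> d (ys j) y"], rule le[OF that])
  have each: "{y \<in> space Q. i < n \<longrightarrow> (i \<in> S \<longleftrightarrow> (\<forall>j. j < n \<longrightarrow> d (ys i) y \<le> d (ys j) y))} \<in> sets Q" for i
  proof -
    consider "\<not> i < n" | "i < n" "i \<in> S" | "i < n" "i \<notin> S" by blast
    then show ?thesis
    proof cases
      case 1
      hence "{y \<in> space Q. i < n \<longrightarrow> (i \<in> S \<longleftrightarrow> (\<forall>j. j < n \<longrightarrow> d (ys i) y \<le> d (ys j) y))} = space Q"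
        by auto
      thus ?thesis by (simp only: sets.top)
    next
      case 2
      hence "{y \<in> space Q. i < n \<longrightarrow> (i \<in> S \<longleftrightarrow> (\<forall>j. j < n \<longrightarrow> d (ys i) y \<le> d (ys j) y))}
           = {y \<in> space Q. \<forall>j. j < n \<longrightarrow> d (ys i) y \<le> d (ys j) y}"
        by auto
      thus ?thesis using all[OF 2(1)] by (simp only:)
    next
      case 3
      hence "{y \<in> space Q. i < n \<longrightarrow> (i \<in> S \<longleftrightarrow> (\<forall>j. j < n \<longrightarrow> d (ys i) y \<le> d (ys j) y))}
           = space Q - {y \<in> space Q. \<forall>j. j < n \<longrightarrow> d (ys i) y \<le> d (ys j) y}"
        by auto
      thus ?thesis using all[OF 3(1)] by (simp only: sets.compl_sets)
    qed
  qed
  have "(\<lambda>y. winners d n ys y) -` {S} \<inter> space Q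
     = {y \<in> space Q. \<forall>i. i < n \<longrightarrow> (i \<in> S \<longleftrightarrow> (\<forall>j. j < n \<longrightarrow> d (ys i) y \<le> d (ys j) y))}"
    using S by (auto simp: winners_def)
  also have "\<dots> \<in> sets Q"
    using sets.sets_Collect_countable_All[of Q "\<lambda>i y. i < n \<longrightarrow> (i \<in> S \<longleftrightarrow> (\<forall>j. j < n \<longrightarrow> d (ys i) y \<le> d (ys j) y))"] each by blast
  finally show "(\<lambda>y. winners d n ys y) -` {S} \<inter> space Q \<in> sets Q" .
qed

lemma inv_nat_le1: "1 / real (m::nat) \<le> 1"
  by (cases m) (auto simp: divide_le_eq)

lemma integrand_integrable:
  assumes Q: "prob_space Q" and "\<forall>j<n. d (ys j) \<in> borel_measurable Q"
  shows "integrable Q (\<lambda>y. if i \<in> winners d n ys y then 1 / real (card (winners d n ys y)) else 0)"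
proof -
  interpret prob_space Q by fact
  have m: "(\<lambda>y. if i \<in> winners d n ys y then 1 / real (card (winners d n ys y)) else 0) \<in> borel_measurable Q"
    using measurable_compose[OF winners_meas[where n=n and d=d and ys=ys and Q=Q, OF assms(2)],
        of "\<lambda>W. if i \<in> W then 1 / real (card W) else 0" borel] by simp
  show ?thesis
  proof (rule integrable_const_bound[where B=1])
    show "AE y in Q. norm (if i \<in> winners d n ys y then 1 / real (card (winners d n ys y)) else 0) \<le> (1::real)"
      by (intro always_eventually allI) (simp add: inv_nat_le1)
  qed (rule m)
qed

lemma util_lower:
  assumes Q: "prob_space Q" and dm: "\<forall>x\<in>X. d x \<in> borel_measurable Q"
    and prof: "\<forall>j<n. ys j \<in> X"
    and A: "{y \<in> space Q. xstar X d y = {x}} \<in> sets Q"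
    and i: "i < n" "ys i = x"
  shows "Pmass X d Q x / real (kcount n ys x) \<le> utility d Q n ys i"
proof -
  interpret prob_space Q by fact
  define A where "A = {y \<in> space Q. xstar X d y = {x}}"
  define K where "K = {j. j < n \<and> ys j = x}"
  have AQ: "A \<in> sets Q" using A by (simp add: A_def)
  have dys: "\<forall>j<n. d (ys j) \<in> borel_measurable Q" using dm prof by auto
  have pt: "winners d n ys y = K" if y: "y \<in> A" for y
  proof -
    have xs: "xstar X d y = {x}" using y by (simp add: A_def)
    hence xX: "x \<in> X" and xmin: "\<forall>x'\<in>X. d x y \<le> d x' y"
      unfolding xstar_def by auto
    have uniq: "z = x" if "z \<in> X" "\<forall>x'\<in>X. d z y \<le> d x' y" for z
      using that xs unfolding xstar_def by blast
    show ?thesis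
    proof (intro set_eqI iffI)
      fix j assume "j \<in> winners d n ys y"
      hence j: "j < n" "\<forall>l<n. d (ys j) y \<le> d (ys l) y" by (auto simp: winners_def)
      hence "d (ys j) y \<le> d x y" using i by metis
      hence "\<forall>x'\<in>X. d (ys j) y \<le> d x' y" using xmin order_trans by blast
      hence "ys j = x" using uniq prof j(1) by blast
      thus "j \<in> K" using j by (simp add: K_def)
    next
      fix j assume "j \<in> K"
      thus "j \<in> winners d n ys y" using xmin prof by (auto simp: K_def winners_def)
    qed
  qed
  have "Pmass X d Q x / real (kcount n ys x) = (\<integral>y. indicator A y / real (card K) \<partial>Q)"
    using AQ by (simp add: Pmass_def kcount_def K_def A_def)
  also have "\<dots> \<le> utility d Q n ys i"
    unfolding utility_def
  proof (rule integral_mono)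
    show "integrable Q (\<lambda>y. indicator A y / real (card K))"
      using AQ by (intro integrable_divide_zero integrable_real_indicator) (auto simp: less_top[symmetric])
    show "integrable Q (\<lambda>y. if i \<in> winners d n ys y then 1 / real (card (winners d n ys y)) else 0)"
      by (rule integrand_integrable[where Q=Q and n=n and d=d and ys=ys, OF Q dys])
    fix y assume "y \<in> space Q"
    show "indicator A y / real (card K) \<le> (if i \<in> winners d n ys y then 1 / real (card (winners d n ys y)) else 0)"
    proof (cases "y \<in> A")
      case True
      have "i \<in> K" using i by (simp add: K_def)
      thus ?thesis using pt[OF True] True by simp
    qed simp
  qed
  finally show ?thesis .
qed

lemma sum_util_le1:
  assumes Q: "prob_space Q" and dys: "\<forall>j<n. d (ys j) \<in> borel_measurable Q"
  shows "(\<Sum>i<n. utility d Q n ys i) \<le> 1"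
proof -
  interpret prob_space Q by fact
  have "(\<Sum>i<n. utility d Q n ys i) =
     (\<integral>y. (\<Sum>i<n. if i \<in> winners d n ys y then 1 / real (card (winners d n ys y)) else 0) \<partial>Q)"
    unfolding utility_def
    by (simp add: integrand_integrable[where Q=Q and n=n and d=d and ys=ys, OF Q dys])
  also have "\<dots> \<le> (\<integral>y. 1 \<partial>Q)"
  proof (rule integral_mono)
    show "integrable Q (\<lambda>y. \<Sum>i<n. if i \<in> winners d n ys y then 1 / real (card (winners d n ys y)) else 0)"
      by (rule Bochner_Integration.integrable_sum, rule integrand_integrable[where Q=Q and n=n and d=d and ys=ys, OF Q dys])
    show "integrable Q (\<lambda>y. 1::real)" by simp
    fix y
    define W where "W = winners d n ys y"
    have W: "W \<subseteq> {..<n}" by (auto simp: W_def winners_def)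
    have "(\<Sum>i<n. if i \<in> W then 1 / real (card W) else 0) = (\<Sum>i\<in>{i\<in>{..<n}. i \<in> W}. 1 / real (card W))"
      by (rule sum.inter_filter[symmetric]) simp
    also have "{i\<in>{..<n}. i \<in> W} = W" using W by auto
    also have "(\<Sum>i\<in>W. 1 / real (card W)) \<le> 1"
      by (cases "card W = 0") auto
    finally have "(\<Sum>i<n. if i \<in> W then 1 / real (card W) else 0) \<le> 1" .
    then show "(\<Sum>i<n. if i \<in> winners d n ys y then 1 / real (card (winners d n ys y)) else 0) \<le> 1"
      by (simp only: W_def)
  qed
  also have "\<dots> = 1" by (simp add: prob_space)
  finally show ?thesis .
qed

theorem lemma5:
  fixes X :: "'x set" and d :: "'x \<Rightarrow> 'y \<Rightarrow> ennreal" and Q :: "'y measure"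
    and n :: nat and c :: real and xs :: "nat \<Rightarrow> 'x"
  assumes Q: "prob_space Q"
    and d_meas: "\<forall>x\<in>X. d x \<in> borel_measurable Q"
    and P_meas: "\<forall>x\<in>Xstar X d Q. {y \<in> space Q. xstar X d y = {x}} \<in> sets Q"
    and unique: "AE y in Q. \<forall>a\<in>xstar X d y. \<forall>b\<in>xstar X d y. a = b"
    and fin: "finite (Xstar X d Q)"
    and c_pos: "c > 0"
    and p0_pos: "p0 X d Q > 0"
    and n_ge: "real n \<ge> 1 / c"
    and c_lt: "1 / c > 2 / p0 X d Q"
    and NE: "pure_NE X d Q n xs"
  shows "\<forall>x\<in>Xstar X d Q. int (kcount n xs x) \<ge> \<lfloor>c * real n\<rfloor>"
proof (intro ballI, rule ccontr)
  fix x assume xS: "x \<in> Xstar X d Q" and neg: "\<not> \<lfloor>c * real n\<rfloor> \<le> int (kcount n xs x)"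
  define k where "k = kcount n xs x"
  define p where "p = p0 X d Q"
  have xX: "x \<in> X" using xS by (auto simp: Xstar_def xstar_def)
  have A: "{y \<in> space Q. xstar X d y = {x}} \<in> sets Q" using P_meas xS by blast
  have prof: "\<forall>j<n. xs j \<in> X" using NE by (simp add: pure_NE_def is_profile_def)
  have dev: "\<forall>i<n. \<forall>x'\<in>X. utility d Q n (xs(i := x')) i \<le> utility d Q n xs i"
    using NE by (simp add: pure_NE_def)
  have "1 / c > 0" using c_pos by simp
  hence n1: "n \<ge> 1" using n_ge by linarith
  have "int k + 1 \<le> \<lfloor>c * real n\<rfloor>" using neg by (simp add: k_def)
  hence kcn: "real k + 1 \<le> c * real n" by linarith
  have Pp: "p \<le> Pmass X d Q x" unfolding p_def p0_def using fin xS by simp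
  have "2 / p < 1 / c" using c_lt by (simp add: p_def)
  hence "2 * c < p" using c_pos p0_pos by (simp add: field_simps p_def)
  hence pc: "c < p" using c_pos by linarith
  have key: "1 / real n < Pmass X d Q x / real m" if "real m \<le> c * real n" "m > 0" for m :: nat
  proof -
    have "p / (c * real n) \<le> Pmass X d Q x / real m"
      using that Pp p0_pos by (intro frac_le) (auto simp: p_def)
    moreover have "1 / real n < p / (c * real n)"
      using pc c_pos n1 by (simp add: field_simps)
    ultimately show ?thesis by linarith
  qed
  have dxs: "\<forall>j<n. d (xs j) \<in> borel_measurable Q" using d_meas prof by auto
  have "\<exists>i<n. utility d Q n xs i \<le> 1 / real n"
  proof (rule ccontr)
    assume "\<not> ?thesis"
    hence "\<forall>i<n. 1 / real n < utility d Q n xs i" by auto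
    hence "(\<Sum>i<n. 1 / real n) < (\<Sum>i<n. utility d Q n xs i)"
      using n1 by (intro sum_strict_mono) (auto simp: lessThan_empty_iff)
    moreover have "(\<Sum>i<n. 1 / real n) = 1" using n1 by simp
    ultimately show False using sum_util_le1[where Q=Q and n=n and d=d and ys=xs, OF Q dxs] by linarith
  qed
  then obtain i where i: "i < n" "utility d Q n xs i \<le> 1 / real n" by blast
  show False
  proof (cases "xs i = x")
    case True
    have "i \<in> {j. j < n \<and> xs j = x}" using i True by simp
    hence "k > 0" unfolding k_def kcount_def by (intro card_gt_0_iff[THEN iffD2]) auto
    hence "1 / real n < Pmass X d Q x / real k" using kcn by (intro key) auto
    also have "\<dots> \<le> utility d Q n xs i"
      unfolding k_def using util_lower[OF Q d_meas prof A i(1) True] .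
    finally show False using i by linarith
  next
    case False
    define ys where "ys = xs(i := x)"
    have yprof: "\<forall>j<n. ys j \<in> X" using prof xX by (simp add: ys_def)
    have "{j. j < n \<and> ys j = x} = insert i {j. j < n \<and> xs j = x}"
      using i by (auto simp: ys_def)
    hence kc: "kcount n ys x = k + 1" using False
      by (simp add: kcount_def k_def)
    have "1 / real n < Pmass X d Q x / real (k + 1)" using kcn by (intro key) auto
    also have "\<dots> = Pmass X d Q x / real (kcount n ys x)" using kc by simp
    also have "\<dots> \<le> utility d Q n ys i"
      by (rule util_lower[OF Q d_meas yprof A i(1)]) (simp add: ys_def)
    also have "\<dots> \<le> utility d Q n xs i" using dev i xX unfolding ys_def by blast
    finally show False using i by linarith
  qed
qed

end
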